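(* Let $k\ge2$ and $c\in\mathcal{S}_k^\beta\setminus\{\mathbf{0}\}$. Then every element of the ideal $\langle\gamma^{\nu(c)+1}\rangle$ appears exactly $q^{\nu(c)}L_\beta(k-1)$ times among the coordinates of $c$, and the remaining $q^{s(k-1)}$ coordinates of $c$ lie in $\langle\gamma^{\nu(c)}\rangle\setminus\langle\gamma^{\nu(c)+1}\rangle$, where $L_\beta(m)=q^{(s-1)(m-1)}\frac{q^m-1}{q-1}$.
   Context: Let $R$ be a finite commutative chain ring with maximal ideal $\langle\gamma\rangle$, nilpotency index $s$ (so $\langle\gamma^s\rangle=\{0\}$) and residue field $R/\langle\gamma\rangle\cong\mathbb{F}_q$. Fix coset representatives $T=\{e_0,\dots,e_{q-1}\}$ with $e_0=0,e_1=1$, ordered $e_0<\dots<e_{q-1}$; each $r\in R$ is uniquely $\sum_{i=0}^{s-1}r_i\gamma^i$, $r_i\in T$; order $R$ by $x>y$ iff $x_i>y_i$ in $T$ for the largest $i$ with $x_i\neq y_i$; list $R=\{\rho_0,\dots,\rho_{q^s-1}\}$ increasingly. $\mathbf{a}^{(m)}$ is the constant vector of length $m$. Define $G_1^\alpha=(\rho_0\ \cdots\ \rho_{q^s-1})$ and, for $k>1$, $G_k^\alpha$ as the matrix of $q^s$ column blocks, the $j$-th having first row $\boldsymbol{\rho_j}^{(q^{s(k-1)})}$ and $G_{k-1}^\alpha$ below. List $\langle\gamma\rangle$ increasingly as $a_0\gamma<\dots<a_{q^{s-1}-1}\gamma$. Define $G_1^\beta=(1)$ and, for $k>1$, $G_k^\beta$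 as the matrix with column blocks: first a block with first row $\mathbf{1}^{(q^{s(k-1)})}$ and $G_{k-1}^\alpha$ below; then for each $j=0,\dots,q^{s-1}-1$ a block with first row the constant vector with entry $a_j\gamma$ and $G_{k-1}^\beta$ below. $\mathcal{S}_k^\beta$ is the $R$-submodule generated by the rows of $G_k^\beta$ (its length is $L_\beta(k)$). Valuation: for $x\in R\setminus\{0\}$, $\nu(x)$ is the largest $m$ with $x=\gamma^m\beta$, $\beta$ a unit; $\nu(0)=\infty$; for $x\in R^n$, $\nu(x)=\min_i\nu(x_i)$. *)

theory Defs
  imports Main "HOL-Library.Multiset"
begin

definition is_ideal :: "'a::comm_ring_1 set \<Rightarrow> bool" where
  "is_ideal I \<longleftrightarrow> 0 \<in> I \<and> (\<forall>x\<in>I. \<forall>y\<in>I. x + y \<in> I) \<and> (\<forall>r. \<forall>x\<in>I. r * x \<in> I)"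

text \<open>Digits of r in the gamma-adic expansion r = sum_{i<s} e_{d i} gamma^i, given as
  indices d i into the list T of coset representatives e_0,...,e_{q-1}.\<close>
definition digits :: "'a::comm_ring_1 list \<Rightarrow> 'a \<Rightarrow> nat \<Rightarrow> 'a \<Rightarrow> nat \<Rightarrow> nat" where
  "digits T g s x = (THE d. (\<forall>i<s. d i < length T) \<and> (\<forall>i. s \<le> i \<longrightarrow> d i = 0)
                           \<and> x = (\<Sum>i<s. T ! (d i) * g ^ i))"

definition chain_less :: "'a::comm_ring_1 list \<Rightarrow> 'a \<Rightarrow> nat \<Rightarrow> 'a \<Rightarrow> 'a \<Rightarrow> bool" where
  "chain_less T g s x y \<longleftrightarrow>
     (\<exists>i<s. digits T g s x i < digits T g s y i \<and>
            (\<forall>j. i < j \<and> j < s \<longrightarrow> digits T g s x j = digits T g s y j))"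

definition rho_list :: "'a::comm_ring_1 list \<Rightarrow> 'a \<Rightarrow> nat \<Rightarrow> 'a list" where
  "rho_list T g s = (THE xs. set xs = UNIV \<and> sorted_wrt (chain_less T g s) xs)"

definition ideal_list :: "'a::comm_ring_1 list \<Rightarrow> 'a \<Rightarrow> nat \<Rightarrow> 'a list" where
  "ideal_list T g s = filter (\<lambda>x. g dvd x) (rho_list T g s)"

text \<open>Matrices are represented as lists of columns; each column is a list (top row first).\<close>
primrec Galpha :: "'a::comm_ring_1 list \<Rightarrow> 'a \<Rightarrow> nat \<Rightarrow> nat \<Rightarrow> 'a list list" where
  "Galpha T g s 0 = [[]]"
| "Galpha T g s (Suc k) =
     concat (map (\<lambda>r. map (\<lambda>col. r # col) (Galpha T g s k)) (rho_list T g s))"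

fun Gbeta :: "'a::comm_ring_1 list \<Rightarrow> 'a \<Rightarrow> nat \<Rightarrow> nat \<Rightarrow> 'a list list" where
  "Gbeta T g s 0 = []"
| "Gbeta T g s (Suc 0) = [[1]]"
| "Gbeta T g s (Suc (Suc k)) =
     map (\<lambda>col. 1 # col) (Galpha T g s (Suc k))
     @ concat (map (\<lambda>a. map (\<lambda>col. a # col) (Gbeta T g s (Suc k))) (ideal_list T g s))"

definition code_beta :: "'a::comm_ring_1 list \<Rightarrow> 'a \<Rightarrow> nat \<Rightarrow> nat \<Rightarrow> 'a list set" where
  "code_beta T g s k = {map (\<lambda>col. \<Sum>i<k. u i * col ! i) (Gbeta T g s k) | u. True}"

definition nu_el :: "'a::comm_ring_1 \<Rightarrow> 'a \<Rightarrow> nat" where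
  "nu_el g x = (GREATEST m. \<exists>b. b dvd 1 \<and> x = g ^ m * b)"

definition nu_vec :: "'a::comm_ring_1 \<Rightarrow> 'a list \<Rightarrow> nat" where
  "nu_vec g c = Min (nu_el g ` (set c - {0}))"

definition L_beta :: "nat \<Rightarrow> nat \<Rightarrow> nat \<Rightarrow> nat" where
  "L_beta q s m = q ^ ((s - 1) * (m - 1)) * ((q ^ m - 1) div (q - 1))"

end

theory Submission
  imports Defs
begin


lemma geo_bound: "(\<forall>j<i. d j < (b::nat)) \<Longrightarrow> (\<Sum>j<i. d j * b ^ j) < b ^ i"
proof (induction i)
  case 0 then show ?case by simp
next
  case (Suc i)
  have IH: "(\<Sum>j<i. d j * b ^ j) < b ^ i" using Suc by simp
  have "d i < b" using Suc.prems by simp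
  then have "Suc (d i) \<le> b" by simp
  then have "Suc (d i) * b ^ i \<le> b * b ^ i" by (rule mult_le_mono1)
  then show ?case using IH by simp
qed

lemma lex_less:
  "(\<forall>j<n. d j < (b::nat)) \<Longrightarrow> (\<forall>j<n. e j < b) \<Longrightarrow> i < n \<Longrightarrow> d i < e i \<Longrightarrow>
   (\<forall>j. i < j \<and> j < n \<longrightarrow> d j = e j) \<Longrightarrow> (\<Sum>j<n. d j * b ^ j) < (\<Sum>j<n. e j * b ^ j)"
proof (induction n)
  case 0 then show ?case by simp
next
  case (Suc n)
  show ?case
  proof (cases "i = n")
    case True
    have g: "(\<Sum>j<n. d j * b ^ j) < b ^ n" by (rule geo_bound) (use Suc.prems in simp)
    have "d n < e n" using Suc.prems True by simp
    then have "Suc (d n) \<le> e n" by simp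
    then have "Suc (d n) * b ^ n \<le> e n * b ^ n" by (rule mult_le_mono1)
    then show ?thesis using g by simp
  next
    case False
    then have "(\<Sum>j<n. d j * b ^ j) < (\<Sum>j<n. e j * b ^ j)"
      using Suc.prems by (intro Suc.IH) auto
    moreover have "d n = e n" using Suc.prems False by simp
    ultimately show ?thesis by simp
  qed
qed


lemma distinct_concat_map:
  "distinct xs \<Longrightarrow> (\<forall>x\<in>set xs. distinct (f x)) \<Longrightarrow>
   (\<forall>x\<in>set xs. \<forall>y\<in>set xs. x \<noteq> y \<longrightarrow> set (f x) \<inter> set (f y) = {}) \<Longrightarrow> distinct (concat (map f xs))"
  by (induction xs) auto

lemma geo_sum_nat: "(p::nat) * (\<Sum>i<m. (Suc p) ^ i) = (Suc p) ^ m - 1"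
proof (induction m)
  case 0 then show ?case by simp
next
  case (Suc m)
  have "1 \<le> (Suc p) ^ m" by simp
  then show ?case using Suc by (simp add: algebra_simps)
qed

lemma L_beta_sum: "2 \<le> q \<Longrightarrow> L_beta q s m = q ^ ((s - 1) * (m - 1)) * (\<Sum>i<m. q ^ i)"
proof -
  assume q: "2 \<le> q"
  define p where "p = q - 1"
  have p: "q = Suc p" "1 \<le> p" using q unfolding p_def by auto
  have "(q ^ m - 1) div (q - 1) = (p * (\<Sum>i<m. q ^ i)) div p" using geo_sum_nat[of p m] p by simp
  also have "\<dots> = (\<Sum>i<m. q ^ i)" using p by simp
  finally show ?thesis unfolding L_beta_def by simp
qed

lemma L_rec: "2 \<le> q \<Longrightarrow> 1 \<le> s \<Longrightarrow> L_beta q s (Suc n) = q ^ (s * n) + q ^ (s - 1) * L_beta q s n"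
proof (cases n)
  case 0
  assume "2 \<le> q" "1 \<le> s"
  then show ?thesis using 0 by (simp add: L_beta_sum)
next
  case (Suc n')
  assume q: "2 \<le> q" and s: "1 \<le> s"
  have e1: "(s - 1) * Suc n' + Suc n' = s * Suc n'" using s by (cases s) auto
  have e2: "(s - 1) * Suc n' = (s - 1) + (s - 1) * n'" by simp
  have "L_beta q s (Suc n) = q ^ ((s - 1) * Suc n') * (q ^ Suc n' + (\<Sum>i<Suc n'. q ^ i))"
    using q Suc by (simp add: L_beta_sum)
  also have "\<dots> = q ^ ((s - 1) * Suc n' + Suc n') + q ^ (s - 1) * (q ^ ((s - 1) * n') * (\<Sum>i<Suc n'. q ^ i))"
    unfolding e2 by (simp add: algebra_simps power_add)
  also have "\<dots> = q ^ (s * n) + q ^ (s - 1) * L_beta q s n"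
    using q Suc e1 by (simp add: L_beta_sum)
  finally show ?thesis .
qed

lemma L_zero: "L_beta q s 0 = 0" unfolding L_beta_def by simp

lemma count_map_shift: "count (mset (map (\<lambda>x. c + x) xs)) y = count (mset xs) (y - (c::'a::ab_group_add))"
  by (induction xs) (auto simp: algebra_simps)

lemma count_concat_map: "distinct xs \<Longrightarrow> count (mset (concat (map f xs))) y = (\<Sum>x\<in>set xs. count (mset (f x)) y)"
proof -
  assume d: "distinct xs"
  have "count (mset (concat (map f xs))) y = sum_list (map (\<lambda>x. count (mset (f x)) y) xs)"
    by (induction xs) auto
  also have "\<dots> = (\<Sum>x\<in>set xs. count (mset (f x)) y)" using d by (simp add: sum_list_distinct_conv_sum_set)
  finally show ?thesis .
qed

lemma count_map_distinct: "distinct xs \<Longrightarrow> count (mset (map f xs)) y = card {x\<in>set xs. f x = y}"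
proof -
  assume d: "distinct xs"
  have "count (mset (map f xs)) y = length (filter (\<lambda>x. f x = y) xs)"
    by (induction xs) auto
  also have "\<dots> = card {x\<in>set xs. f x = y}" using distinct_length_filter[OF d] by (simp add: Collect_conj_eq Int_commute)
  finally show ?thesis .
qed

lemma filter_count: "finite S \<Longrightarrow> length (filter (\<lambda>x. x \<in> S) xs) = (\<Sum>y\<in>S. count (mset xs) y)"
proof (induction xs)
  case Nil then show ?case by simp
next
  case (Cons a xs)
  have "(\<Sum>y\<in>S. count (mset (a # xs)) y) = (\<Sum>y\<in>S. count (mset xs) y + (if y = a then 1 else 0))"
    by (rule sum.cong) auto
  also have "\<dots> = (\<Sum>y\<in>S. count (mset xs) y) + (\<Sum>y\<in>S. (if y = a then 1 else 0))"
    by (rule sum.distrib)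
  also have "(\<Sum>y\<in>S. (if y = a then 1 else 0)) = (if a \<in> S then 1 else (0::nat))"
    using Cons.prems by (simp add: sum.delta)
  finally show ?case using Cons by simp
qed

lemma swap_count: "finite A \<Longrightarrow>
  (\<Sum>a\<in>A. count (mset L) (y - f a)) = sum_list (map (\<lambda>b. card {a\<in>A. f a = y - (b::'a::ab_group_add)}) L)"
proof (induction L)
  case Nil then show ?case by simp
next
  case (Cons b L)
  have "(\<Sum>a\<in>A. count (mset (b # L)) (y - f a)) = (\<Sum>a\<in>A. count (mset L) (y - f a) + (if f a = y - b then 1 else 0))"
    by (rule sum.cong) (auto simp: algebra_simps)
  also have "\<dots> = (\<Sum>a\<in>A. count (mset L) (y - f a)) + (\<Sum>a\<in>A. (if f a = y - b then 1 else 0))"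
    by (rule sum.distrib)
  also have "(\<Sum>a\<in>A. (if f a = y - b then 1 else 0)) = card {a\<in>A. f a = y - b}"
    using Cons.prems by (simp add: sum.inter_filter[symmetric])
  finally show ?case using Cons by simp
qed

locale cr =
  fixes g :: "'a::{comm_ring_1,finite}" and T :: "'a list" and s :: nat
  assumes maxideal: "{x. g dvd x} = {x. \<not> x dvd 1}"
    and s_pos: "1 \<le> s" and nil: "g ^ s = 0" and nil_min: "g ^ (s - 1) \<noteq> 0"
    and T_len: "2 \<le> length T"
    and reps: "\<forall>x. \<exists>!i. i < length T \<and> g dvd (x - T ! i)"
begin

abbreviation "q \<equiv> length T"

lemma unit_iff: "\<not> g dvd x \<longleftrightarrow> x dvd 1"
  using maxideal by (auto simp: set_eq_iff)

lemma pow_big: "s \<le> m \<Longrightarrow> g ^ m = 0"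
  by (metis le_add_diff_inverse mult_zero_left nil power_add)

lemma keyK:
  assumes "j < s" "g ^ Suc j dvd g ^ j * x" shows "g dvd x"
proof (rule ccontr)
  assume nx: "\<not> g dvd x"
  obtain z where z: "g ^ j * x = g ^ Suc j * z" using assms(2) by (auto elim: dvdE)
  have "g ^ j * (x - g * z) = 0" using z by (simp add: algebra_simps)
  moreover have "\<not> g dvd (x - g * z)"
  proof
    assume "g dvd x - g * z"
    then have "g dvd (x - g * z) + g * z" by (metis dvd_add dvd_triv_left)
    with nx show False by simp
  qed
  then obtain w where w: "(x - g * z) * w = 1" using unit_iff by (auto elim: dvdE simp: mult.commute)
  ultimately have "g ^ j = 0"
    by (metis mult.assoc mult.right_neutral mult_zero_left)
  moreover have "g ^ (s - 1) = g ^ j * g ^ (s - 1 - j)"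
    using assms(1) by (simp flip: power_add)
  ultimately have "g ^ (s - 1) = 0" by simp
  with nil_min show False by simp
qed

lemma T_inj: "i < q \<Longrightarrow> j < q \<Longrightarrow> g dvd (T ! i - T ! j) \<Longrightarrow> i = j"
proof -
  assume a: "i < q" "j < q" "g dvd (T ! i - T ! j)"
  from reps have "\<exists>!l. l < q \<and> g dvd (T ! i - T ! l)" by blast
  moreover have "g dvd (T ! i - T ! i)" by simp
  ultimately show "i = j" using a by blast
qed

lemma card_step:
  assumes "j < s"
  shows "card {x. g ^ j dvd x} = q * card {x. g ^ Suc j dvd x}"
proof -
  let ?I = "{x. g ^ Suc j dvd x}"
  let ?A = "\<lambda>i. (\<lambda>z. g ^ j * T ! i + z) ` ?I"
  have eq: "{x. g ^ j dvd x} = (\<Union>i\<in>{..<q}. ?A i)"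
  proof (rule set_eqI, rule iffI)
    fix x assume "x \<in> {x. g ^ j dvd x}"
    then obtain z where xz: "x = g ^ j * z" by (auto elim: dvdE)
    obtain i where i: "i < q" "g dvd (z - T ! i)" using reps by blast
    then obtain w where w: "z - T ! i = g * w" by (auto elim: dvdE)
    have "x = g ^ j * T ! i + g ^ Suc j * w" using xz w by (simp add: algebra_simps)
    moreover have "g ^ Suc j * w \<in> ?I" by simp
    ultimately have "x \<in> ?A i" by (intro image_eqI) auto
    then show "x \<in> (\<Union>i\<in>{..<q}. ?A i)" using i by blast
  next
    fix x assume "x \<in> (\<Union>i\<in>{..<q}. ?A i)"
    then obtain i z where "x = g ^ j * T ! i + z" "g ^ Suc j dvd z" by blast
    moreover have "g ^ j dvd g ^ Suc j" by (simp add: le_imp_power_dvd)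
    ultimately show "x \<in> {x. g ^ j dvd x}" by (metis dvd_add dvd_trans dvd_triv_left mem_Collect_eq)
  qed
  have disj: "?A i \<inter> ?A i' = {}" if "i \<in> {..<q}" "i' \<in> {..<q}" "i \<noteq> i'" for i i'
  proof (rule ccontr)
    assume "?A i \<inter> ?A i' \<noteq> {}"
    then obtain a b where ab: "g ^ j * T ! i + a = g ^ j * T ! i' + b" "g ^ Suc j dvd a" "g ^ Suc j dvd b"
      by blast
    have "g ^ j * (T ! i - T ! i') = b - a" using ab(1) by (simp add: algebra_simps)
    moreover have "g ^ Suc j dvd b - a" using ab by (simp add: dvd_diff)
    ultimately have "g dvd (T ! i - T ! i')" using keyK[OF assms] by metis
    then show False using T_inj that by auto
  qed
  have cardA: "card (?A i) = card ?I" for i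
    by (rule card_image) (auto simp: inj_on_def)
  have "card {x. g ^ j dvd x} = (\<Sum>i\<in>{..<q}. card (?A i))"
    unfolding eq
    apply (rule card_UN_disjoint)
      apply simp
     apply simp
    using disj by blast
  also have "\<dots> = q * card ?I" using cardA by simp
  finally show ?thesis .
qed

lemma card_I: "j \<le> s \<Longrightarrow> card {x. g ^ j dvd x} = q ^ (s - j)"
proof -
  have "d \<le> s \<Longrightarrow> card {x. g ^ (s - d) dvd x} = q ^ d" for d
  proof (induction d)
    case 0
    have "{x. g ^ s dvd x} = {0}" using nil by auto
    then show ?case by simp
  next
    case (Suc d)
    have "s - Suc d < s" "Suc (s - Suc d) = s - d" using Suc.prems by auto
    then show ?case using card_step[of "s - Suc d"] Suc by simp
  qed
  from this[of "s - j"] show "j \<le> s \<Longrightarrow> ?thesis" by simp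
qed

lemma card_UNIV_R: "card (UNIV :: 'a set) = q ^ s"
  using card_I[of 0] by simp

lemma val_exists:
  assumes "x \<noteq> 0" shows "\<exists>m<s. g ^ m dvd x \<and> \<not> g ^ Suc m dvd x"
proof -
  have "\<exists>n. \<not> g ^ n dvd x" using assms nil by (intro exI[of _ s]) auto
  then obtain n where n: "\<not> g ^ n dvd x" "\<And>m. m < n \<Longrightarrow> g ^ m dvd x"
    using exists_least_iff[of "\<lambda>n. \<not> g ^ n dvd x"] by blast
  have "n \<noteq> 0" using n(1) by (metis one_dvd power_0)
  moreover have "n \<le> s"
  proof (rule ccontr)
    assume "\<not> n \<le> s"
    then have "g ^ s dvd x" using n(2) by simp
    then show False using nil assms by simp
  qed
  ultimately show ?thesis using n by (intro exI[of _ "n - 1"]) auto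
qed

lemma dvd_pow_iff:
  assumes "g ^ m dvd x" "\<not> g ^ Suc m dvd x" shows "g ^ j dvd x \<longleftrightarrow> j \<le> m"
proof
  assume "g ^ j dvd x"
  show "j \<le> m"
  proof (rule ccontr)
    assume "\<not> j \<le> m"
    then have "Suc m \<le> j" by simp
    then have "g ^ Suc m dvd g ^ j" by (rule le_imp_power_dvd)
    with \<open>g ^ j dvd x\<close> assms(2) show False by (blast intro: dvd_trans)
  qed
next
  assume "j \<le> m"
  then show "g ^ j dvd x" using assms(1) by (blast intro: dvd_trans le_imp_power_dvd)
qed

lemma nu_el_eq:
  assumes "g ^ m dvd x" "\<not> g ^ Suc m dvd x" shows "nu_el g x = m"
  unfolding nu_el_def
proof (rule Greatest_equality)
  obtain b where b: "x = g ^ m * b" using assms(1) by (auto elim: dvdE)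
  have "\<not> g dvd b"
  proof
    assume "g dvd b"
    then have "g ^ m * g dvd g ^ m * b" by (rule mult_dvd_mono[OF dvd_refl])
    then show False using assms(2) b by (metis power_Suc2)
  qed
  then show "\<exists>b. b dvd 1 \<and> x = g ^ m * b" using b unit_iff by blast
next
  fix y assume "\<exists>b. b dvd 1 \<and> x = g ^ y * b"
  then have "g ^ y dvd x" by auto
  then show "y \<le> m" using dvd_pow_iff[OF assms] by simp
qed

lemma exp_exists:
  "\<exists>d y. (\<forall>i<n. d i < q) \<and> (\<forall>i. n \<le> i \<longrightarrow> d i = 0) \<and> x = (\<Sum>i<n. T ! (d i) * g ^ i) + g ^ n * y"
proof (induction n)
  case 0
  show ?case by (intro exI[of _ "\<lambda>_. 0"] exI[of _ x]) simp
next
  case (Suc n)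
  then obtain d y where dy: "\<forall>i<n. d i < q" "\<forall>i. n \<le> i \<longrightarrow> d i = 0"
    "x = (\<Sum>i<n. T ! (d i) * g ^ i) + g ^ n * y" by blast
  obtain j where j: "j < q" "g dvd (y - T ! j)" using reps by blast
  then obtain y' where y': "y - T ! j = g * y'" by (auto elim: dvdE)
  let ?d = "d(n := j)"
  have s1: "(\<Sum>i<n. T ! (?d i) * g ^ i) = (\<Sum>i<n. T ! (d i) * g ^ i)"
    by (rule sum.cong) auto
  have "x = (\<Sum>i<Suc n. T ! (?d i) * g ^ i) + g ^ Suc n * y'"
    using dy(3) y' s1 by (simp add: algebra_simps)
  moreover have "\<forall>i<Suc n. ?d i < q" using dy j by (auto simp: less_Suc_eq)
  moreover have "\<forall>i. Suc n \<le> i \<longrightarrow> ?d i = 0" using dy by auto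
  ultimately show ?case by blast
qed

lemma exp_uniq:
  "n \<le> s \<Longrightarrow> \<forall>i<n. d i < q \<Longrightarrow> \<forall>i<n. e i < q \<Longrightarrow>
   g ^ n dvd ((\<Sum>i<n. T ! (d i) * g ^ i) - (\<Sum>i<n. T ! (e i) * g ^ i)) \<Longrightarrow> \<forall>i<n. d i = e i"
proof (induction n)
  case 0
  then show ?case by simp
next
  case (Suc n)
  let ?D = "(\<Sum>i<n. T ! (d i) * g ^ i) - (\<Sum>i<n. T ! (e i) * g ^ i)"
  have split: "(\<Sum>i<Suc n. T ! (d i) * g ^ i) - (\<Sum>i<Suc n. T ! (e i) * g ^ i)
      = ?D + g ^ n * (T ! (d n) - T ! (e n))" by (simp add: algebra_simps)
  have "g ^ n dvd g ^ Suc n" by (simp add: le_imp_power_dvd)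
  from dvd_trans[OF this Suc.prems(4)]
  have "g ^ n dvd ?D + g ^ n * (T ! (d n) - T ! (e n))" unfolding split .
  then have "g ^ n dvd ?D" by (simp add: dvd_add_left_iff)
  have p1: "n \<le> s" "\<forall>i<n. d i < q" "\<forall>i<n. e i < q" using Suc.prems by auto
  have IH: "\<forall>i<n. d i = e i" by (rule Suc.IH[OF p1 \<open>g ^ n dvd ?D\<close>])
  then have "?D = 0" by simp
  then have "g ^ Suc n dvd g ^ n * (T ! (d n) - T ! (e n))" using Suc.prems(4) split by simp
  moreover have "n < s" using Suc.prems(1) by simp
  ultimately have "g dvd (T ! (d n) - T ! (e n))" using keyK by blast
  then have "d n = e n" using T_inj Suc.prems by simp
  with IH show ?case by (auto simp: less_Suc_eq)
qed

lemma digits_ex1: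
  "\<exists>!d. (\<forall>i<s. d i < q) \<and> (\<forall>i. s \<le> i \<longrightarrow> d i = 0) \<and> x = (\<Sum>i<s. T ! (d i) * g ^ i)"
proof -
  obtain d y where "(\<forall>i<s. d i < q) \<and> (\<forall>i. s \<le> i \<longrightarrow> d i = 0) \<and> x = (\<Sum>i<s. T ! (d i) * g ^ i) + g ^ s * y"
    using exp_exists by blast
  then have ex: "(\<forall>i<s. d i < q) \<and> (\<forall>i. s \<le> i \<longrightarrow> d i = 0) \<and> x = (\<Sum>i<s. T ! (d i) * g ^ i)"
    using nil by simp
  show ?thesis
  proof (rule ex1I[of _ d])
    show "(\<forall>i<s. d i < q) \<and> (\<forall>i. s \<le> i \<longrightarrow> d i = 0) \<and> x = (\<Sum>i<s. T ! (d i) * g ^ i)" by (fact ex)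
  next
    fix e assume e: "(\<forall>i<s. e i < q) \<and> (\<forall>i. s \<le> i \<longrightarrow> e i = 0) \<and> x = (\<Sum>i<s. T ! (e i) * g ^ i)"
    have "\<forall>i<s. e i = d i"
      by (rule exp_uniq) (use e ex in auto)
    show "e = d"
    proof (rule ext)
      fix i show "e i = d i" using e ex \<open>\<forall>i<s. e i = d i\<close> by (cases "i < s") auto
    qed
  qed
qed

abbreviation "dg x \<equiv> digits T g s x"

lemma dg_props: "(\<forall>i<s. dg x i < q) \<and> (\<forall>i. s \<le> i \<longrightarrow> dg x i = 0) \<and> x = (\<Sum>i<s. T ! (dg x i) * g ^ i)"
  unfolding digits_def by (rule theI'[OF digits_ex1])

lemma dg_lt: "i < s \<Longrightarrow> dg x i < q" using dg_props by blast
lemma dg_ge: "s \<le> i \<Longrightarrow> dg x i = 0" using dg_props by blast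
lemma dg_sum: "x = (\<Sum>i<s. T ! (dg x i) * g ^ i)" using dg_props by blast


abbreviation "key x \<equiv> (\<Sum>i<s. dg x i * q ^ i)"

lemma CL_key: "chain_less T g s x y \<Longrightarrow> key x < key y"
  unfolding chain_less_def
proof -
  assume "\<exists>i<s. dg x i < dg y i \<and> (\<forall>j. i < j \<and> j < s \<longrightarrow> dg x j = dg y j)"
  then obtain i where i: "i < s" "dg x i < dg y i" "\<forall>j. i < j \<and> j < s \<longrightarrow> dg x j = dg y j" by blast
  show "key x < key y"
    by (rule lex_less[OF _ _ i]) (simp_all add: dg_lt)
qed

lemma CL_total: "x \<noteq> y \<Longrightarrow> chain_less T g s x y \<or> chain_less T g s y x"
proof -
  assume xy: "x \<noteq> y"
  define A where "A = {i. i < s \<and> dg x i \<noteq> dg y i}"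
  have "A \<noteq> {}"
  proof
    assume A0: "A = {}"
    have "(\<Sum>i<s. T ! (dg x i) * g ^ i) = (\<Sum>i<s. T ! (dg y i) * g ^ i)"
    proof (rule sum.cong)
      fix i assume "i \<in> {..<s}"
      then have "dg x i = dg y i" using A0 unfolding A_def by blast
      then show "T ! (dg x i) * g ^ i = T ! (dg y i) * g ^ i" by simp
    qed simp
    then have "x = y" using dg_sum[of x] dg_sum[of y] by argo
    then show False using xy by simp
  qed
  moreover have fin: "finite A" unfolding A_def by simp
  ultimately have iA: "Max A \<in> A" by (intro Max_in)
  have above: "\<forall>j. Max A < j \<and> j < s \<longrightarrow> dg x j = dg y j"
  proof (intro allI impI)
    fix j assume j: "Max A < j \<and> j < s"
    show "dg x j = dg y j"
    proof (rule ccontr)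
      assume "dg x j \<noteq> dg y j"
      then have "j \<in> A" unfolding A_def using j by blast
      then have "j \<le> Max A" using Max_ge[OF fin] by blast
      then show False using j by simp
    qed
  qed
  have ms: "Max A < s" "dg x (Max A) \<noteq> dg y (Max A)" using iA unfolding A_def by auto
  show ?thesis
  proof (cases "dg x (Max A) < dg y (Max A)")
    case True
    then show ?thesis unfolding chain_less_def using ms above by blast
  next
    case False
    then have "dg y (Max A) < dg x (Max A)" using ms by simp
    moreover have "\<forall>j. Max A < j \<and> j < s \<longrightarrow> dg y j = dg x j" using above by simp
    ultimately show ?thesis unfolding chain_less_def using ms by blast
  qed
qed

lemma key_less_iff: "key x < key y \<longleftrightarrow> chain_less T g s x y"
proof
  assume k: "key x < key y"
  then have "x \<noteq> y" by auto
  show "chain_less T g s x y"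
  proof (rule ccontr)
    assume "\<not> chain_less T g s x y"
    then have "chain_less T g s y x" using CL_total \<open>x \<noteq> y\<close> by blast
    then have "key y < key x" by (rule CL_key)
    then show False using k by simp
  qed
qed (rule CL_key)

lemma inj_key: "inj key"
proof (rule injI)
  fix x y assume "key x = key y"
  show "x = y"
  proof (rule ccontr)
    assume "x \<noteq> y"
    then have "key x < key y \<or> key y < key x" using CL_total CL_key by blast
    then show False using \<open>key x = key y\<close> by simp
  qed
qed

lemma rho_ex1: "\<exists>!xs. set xs = UNIV \<and> sorted_wrt (chain_less T g s) xs"
proof -
  obtain ks where ks: "sorted_wrt (<) ks" "set ks = range key"
    using ex1_sorted_list_for_set_if_finite[of "range key"] by auto
  have ik: "inv key (key x) = x" for x by (rule inv_f_f[OF inj_key])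
  show ?thesis
  proof (rule ex1I[of _ "map (inv key) ks"])
    have "set (map (inv key) ks) = UNIV" using ks(2) ik by (auto simp: image_image)
    moreover have "sorted_wrt (chain_less T g s) (map (inv key) ks)"
      unfolding sorted_wrt_map
      by (rule sorted_wrt_mono_rel[OF _ ks(1)]) (use ks(2) ik key_less_iff in auto)
    ultimately show "set (map (inv key) ks) = UNIV \<and> sorted_wrt (chain_less T g s) (map (inv key) ks)" by simp
  next
    fix xs assume xs: "set xs = UNIV \<and> sorted_wrt (chain_less T g s) xs"
    have "sorted_wrt (<) (map key xs)"
      unfolding sorted_wrt_map by (rule sorted_wrt_mono_rel[of _ "chain_less T g s"]) (use xs CL_key in auto)
    moreover have "set (map key xs) = range key" using xs by simp
    ultimately have "map key xs = ks" using strict_sorted_equal ks by metis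
    then have "map (inv key) (map key xs) = map (inv key) ks" by simp
    then show "xs = map (inv key) ks" using ik by (simp add: map_idI)
  qed
qed

lemma rho_props: "set (rho_list T g s) = UNIV" "distinct (rho_list T g s)"
proof -
  have h: "set (rho_list T g s) = UNIV \<and> sorted_wrt (chain_less T g s) (rho_list T g s)"
    unfolding rho_list_def by (rule theI'[OF rho_ex1])
  then show "set (rho_list T g s) = UNIV" by simp
  have "sorted_wrt (<) (map key (rho_list T g s))"
    unfolding sorted_wrt_map by (rule sorted_wrt_mono_rel[of _ "chain_less T g s"]) (use h CL_key in auto)
  then have "distinct (map key (rho_list T g s))" by (simp add: strict_sorted_iff)
  then show "distinct (rho_list T g s)" by (simp add: distinct_map)
qed

lemma ideal_props: "set (ideal_list T g s) = {x. g dvd x}" "distinct (ideal_list T g s)"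
  "length (ideal_list T g s) = q ^ (s - 1)"
proof -
  show s1: "set (ideal_list T g s) = {x. g dvd x}" unfolding ideal_list_def using rho_props by auto
  show d: "distinct (ideal_list T g s)" unfolding ideal_list_def using rho_props by auto
  have "length (ideal_list T g s) = card {x. g dvd x}" using distinct_card[OF d] s1 by simp
  also have "\<dots> = q ^ (s - 1)" using card_I[of 1] s_pos by simp
  finally show "length (ideal_list T g s) = q ^ (s - 1)" .
qed

lemma galpha_props: "set (Galpha T g s m) = {xs. length xs = m} \<and> distinct (Galpha T g s m)"
proof (induction m)
  case 0 then show ?case by auto
next
  case (Suc m)
  have s1: "set (Galpha T g s (Suc m)) = {xs. length xs = Suc m}"
    using Suc rho_props by (auto simp: length_Suc_conv)
  have "distinct (Galpha T g s (Suc m))"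
    unfolding Galpha.simps
  proof (rule distinct_concat_map)
    show "distinct (rho_list T g s)" by (rule rho_props)
    show "\<forall>x\<in>set (rho_list T g s). distinct (map ((#) x) (Galpha T g s m))"
      using Suc by (simp add: distinct_map)
    show "\<forall>x\<in>set (rho_list T g s). \<forall>y\<in>set (rho_list T g s). x \<noteq> y \<longrightarrow>
       set (map ((#) x) (Galpha T g s m)) \<inter> set (map ((#) y) (Galpha T g s m)) = {}" by auto
  qed
  with s1 show ?case by simp
qed

lemma galpha_len: "length (Galpha T g s m) = q ^ (s * m)"
proof -
  have "length (Galpha T g s m) = card {xs::'a list. length xs = m}"
    using galpha_props distinct_card by metis
  also have "\<dots> = card (UNIV::'a set) ^ m"
    using card_lists_length_eq[of "UNIV::'a set" m] by simp
  also have "\<dots> = q ^ (s * m)" by (simp add: card_UNIV_R power_mult)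
  finally show ?thesis .
qed

lemma gbeta_len: "length (Gbeta T g s (Suc n)) = L_beta q s (Suc n)"
proof (induction n)
  case 0 then show ?case using T_len by (simp add: L_beta_def)
next
  case (Suc n)
  have "length (Gbeta T g s (Suc (Suc n))) = q ^ (s * Suc n) + length (ideal_list T g s) * L_beta q s (Suc n)"
    using Suc galpha_len[of "Suc n"] by (simp del: Galpha.simps add: length_concat o_def sum_list_triv)
  also have "\<dots> = L_beta q s (Suc (Suc n))"
    using L_rec[of q s "Suc n"] T_len s_pos ideal_props by simp
  finally show ?case .
qed

lemma t_lt_s: "g ^ t dvd x \<Longrightarrow> \<not> g ^ Suc t dvd x \<Longrightarrow> t < s"
proof (rule ccontr)
  assume "g ^ t dvd x" "\<not> g ^ Suc t dvd x" "\<not> t < s"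
  then have "x = 0" using pow_big by simp
  then show False using \<open>\<not> g ^ Suc t dvd x\<close> by simp
qed

lemma dot_add: "length xs = m \<Longrightarrow> length ys = m \<Longrightarrow>
  (\<Sum>i<m. (w::nat\<Rightarrow>'a) i * map2 (+) xs ys ! i) = (\<Sum>i<m. w i * xs ! i) + (\<Sum>i<m. w i * ys ! i)"
proof -
  assume l: "length xs = m" "length ys = m"
  have "(\<Sum>i<m. w i * map2 (+) xs ys ! i) = (\<Sum>i<m. w i * xs ! i + w i * ys ! i)"
    by (rule sum.cong) (auto simp: distrib_left l)
  then show ?thesis by (simp add: sum.distrib)
qed

lemma dot_diff: "length xs = m \<Longrightarrow> length ys = m \<Longrightarrow>
  (\<Sum>i<m. (w::nat\<Rightarrow>'a) i * map2 (-) xs ys ! i) = (\<Sum>i<m. w i * xs ! i) - (\<Sum>i<m. w i * ys ! i)"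
proof -
  assume l: "length xs = m" "length ys = m"
  have "(\<Sum>i<m. w i * map2 (-) xs ys ! i) = (\<Sum>i<m. w i * xs ! i - w i * ys ! i)"
    by (rule sum.cong) (auto simp: right_diff_distrib l)
  then show ?thesis by (simp add: sum_subtractf)
qed

lemma uniform:
  assumes w: "\<forall>i<m. g ^ t dvd w i" and j: "j < m" "\<not> g ^ Suc t dvd w j" and y: "g ^ t dvd y"
  shows "card {xs. length xs = m \<and> (\<Sum>i<m. w i * xs ! i) = y} = q ^ (s * (m - 1) + t)"
proof -
  define F where "F y = {xs. length xs = m \<and> (\<Sum>i<m. w i * xs ! i) = y}" for y
  have wj: "g ^ t dvd w j" using w j(1) by blast
  have ts: "t < s" using t_lt_s[OF wj j(2)] .
  obtain v where v: "w j = g ^ t * v" using wj by (erule dvdE)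
  have "\<not> g dvd v"
  proof
    assume "g dvd v"
    then have "g ^ t * g dvd g ^ t * v" by (rule mult_dvd_mono[OF dvd_refl])
    then show False using j v by (metis power_Suc2)
  qed
  then have "v dvd 1" using unit_iff by blast
  then obtain v' where "1 = v * v'" by (erule dvdE)
  then have v': "v * v' = 1" by simp
  have fin: "finite (F y)" for y
    by (rule finite_subset[OF _ finite_lists_length_eq[OF finite_UNIV, of m]]) (auto simp: F_def)
  have same: "card (F y) = card (F 0)" if yt: "g ^ t dvd y" for y
  proof -
    from yt obtain z where z: "y = g ^ t * z" by (erule dvdE)
    define x0 where "x0 = (replicate m 0)[j := z * v']"
    have lx0: "length x0 = m" unfolding x0_def by simp
    have "(\<Sum>i<m. w i * x0 ! i) = (\<Sum>i<m. if i = j then w j * (z * v') else 0)"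
      by (rule sum.cong) (auto simp: x0_def nth_list_update)
    also have "\<dots> = w j * (z * v')" using j by simp
    also have "\<dots> = g ^ t * z * (v * v')" using v by (simp add: ac_simps)
    also have "\<dots> = y" using v' z by simp
    finally have dx0: "(\<Sum>i<m. w i * x0 ! i) = y" .
    have inj1: "inj_on (\<lambda>xs. map2 (+) xs x0) (F 0)"
    proof (rule inj_onI)
      fix a b assume ab: "a \<in> F 0" "b \<in> F 0" "map2 (+) a x0 = map2 (+) b x0"
      show "a = b"
      proof (rule nth_equalityI)
        show "length a = length b" using ab unfolding F_def by simp
        fix i assume "i < length a"
        then have "map2 (+) a x0 ! i = map2 (+) b x0 ! i" using ab by simp
        moreover have "length a = m" "length b = m" using ab(1,2) unfolding F_def by auto
        ultimately show "a ! i = b ! i" using \<open>i < length a\<close> lx0 by simp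
      qed
    qed
    have im1: "(\<lambda>xs. map2 (+) xs x0) ` F 0 \<subseteq> F y"
    proof
      fix xs assume "xs \<in> (\<lambda>xs. map2 (+) xs x0) ` F 0"
      then obtain a where a: "a \<in> F 0" "xs = map2 (+) a x0" by blast
      have la: "length a = m" using a(1) unfolding F_def by simp
      have "(\<Sum>i<m. w i * a ! i) = 0" using a(1) unfolding F_def by simp
      then show "xs \<in> F y" using dot_add[OF la lx0, of w] lx0 dx0 la a(2) unfolding F_def by simp
    qed
    have inj2: "inj_on (\<lambda>xs. map2 (-) xs x0) (F y)"
    proof (rule inj_onI)
      fix a b assume ab: "a \<in> F y" "b \<in> F y" "map2 (-) a x0 = map2 (-) b x0"
      show "a = b"
      proof (rule nth_equalityI)
        show "length a = length b" using ab unfolding F_def by simp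
        fix i assume "i < length a"
        then have "map2 (-) a x0 ! i = map2 (-) b x0 ! i" using ab by simp
        moreover have "length a = m" "length b = m" using ab(1,2) unfolding F_def by auto
        ultimately show "a ! i = b ! i" using \<open>i < length a\<close> lx0 by simp
      qed
    qed
    have im2: "(\<lambda>xs. map2 (-) xs x0) ` F y \<subseteq> F 0"
    proof
      fix xs assume "xs \<in> (\<lambda>xs. map2 (-) xs x0) ` F y"
      then obtain a where a: "a \<in> F y" "xs = map2 (-) a x0" by blast
      have la: "length a = m" using a(1) unfolding F_def by simp
      have "(\<Sum>i<m. w i * a ! i) = y" using a(1) unfolding F_def by simp
      then show "xs \<in> F 0" using dot_diff[OF la lx0, of w] lx0 dx0 la a(2) unfolding F_def by simp
    qed
    have "card (F 0) \<le> card (F y)" using card_inj_on_le[OF inj1 im1 fin] .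
    moreover have "card (F y) \<le> card (F 0)" using card_inj_on_le[OF inj2 im2 fin] .
    ultimately show ?thesis by simp
  qed
  have alldv: "g ^ t dvd (\<Sum>i<m. w i * xs ! i)" for xs
    using w by (intro dvd_sum) (auto intro: dvd_mult2)
  have V: "{xs::'a list. length xs = m} = (\<Union>y\<in>{y. g ^ t dvd y}. F y)"
  proof (rule set_eqI, rule iffI)
    fix xs assume "xs \<in> {xs::'a list. length xs = m}"
    then have "xs \<in> F (\<Sum>i<m. w i * xs ! i)" unfolding F_def by simp
    then show "xs \<in> (\<Union>y\<in>{y. g ^ t dvd y}. F y)" using alldv[of xs] by blast
  next
    fix xs assume "xs \<in> (\<Union>y\<in>{y. g ^ t dvd y}. F y)"
    then show "xs \<in> {xs::'a list. length xs = m}" unfolding F_def by blast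
  qed
  have "q ^ (s * m) = card {xs::'a list. length xs = m}"
    using card_lists_length_eq[of "UNIV::'a set" m] by (simp add: card_UNIV_R power_mult)
  also have "\<dots> = (\<Sum>y\<in>{y. g ^ t dvd y}. card (F y))"
    unfolding V
    apply (rule card_UN_disjoint)
      apply simp
     apply (simp add: fin)
    apply (unfold F_def)
    apply blast
    done
  also have "\<dots> = (\<Sum>y\<in>{y. g ^ t dvd y}. card (F 0))"
  proof (rule sum.cong)
    fix y assume "y \<in> {y. g ^ t dvd y}"
    then show "card (F y) = card (F 0)" using same by blast
  qed (rule refl)
  also have "\<dots> = card {y. g ^ t dvd y} * card (F 0)" by simp
  also have "card {y. g ^ t dvd y} = q ^ (s - t)" using card_I[of t] ts by simp
  finally have eq: "q ^ (s * m) = q ^ (s - t) * card (F 0)" .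
  obtain m' where m': "m = Suc m'" using j(1) by (cases m) auto
  have sm: "s * m = (s - t) + (s * (m - 1) + t)" using ts unfolding m' by simp
  have "q ^ (s - t) * q ^ (s * (m - 1) + t) = q ^ (s * m)"
    unfolding sm by (rule power_add[symmetric])
  then have "q ^ (s - t) * q ^ (s * (m - 1) + t) = q ^ (s - t) * card (F 0)"
    using eq by (rule trans)
  moreover have "q ^ (s - t) \<noteq> 0" using T_len by (auto simp del: length_0_conv)
  ultimately have "card (F 0) = q ^ (s * (m - 1) + t)" using mult_left_cancel by metis
  then have "card (F y) = q ^ (s * (m - 1) + t)" using same[OF y] by simp
  then show ?thesis unfolding F_def .
qed

lemma lemmaM:
  assumes a1: "g ^ t dvd u0" and a2: "\<not> g ^ Suc t dvd u0" and a3: "g ^ Suc t dvd z"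
  shows "card {a. g dvd a \<and> u0 * a = z} = q ^ t"
proof -
  have ts: "t < s" using t_lt_s[OF a1 a2] .
  from a1 obtain v where v: "u0 = g ^ t * v" by (erule dvdE)
  have "\<not> g dvd v"
  proof
    assume "g dvd v"
    then have "g ^ t * g dvd g ^ t * v" by (rule mult_dvd_mono[OF dvd_refl])
    then show False using a2 v by (metis power_Suc2)
  qed
  then have "v dvd 1" using unit_iff by blast
  then obtain v' where "1 = v * v'" by (erule dvdE)
  then have v': "v' * v = 1" by (simp add: mult.commute)
  have e1: "{a. g dvd a \<and> u0 * a = z} = {a. u0 * a = z}"
  proof (rule set_eqI, rule iffI)
    fix a assume "a \<in> {a. u0 * a = z}"
    then have a: "u0 * a = z" by simp
    then have "g ^ Suc t dvd g ^ t * (v * a)" using a3 v by (simp add: mult.assoc)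
    then have "g dvd v * a" using keyK ts by blast
    then have "g dvd v' * (v * a)" by (rule dvd_mult)
    also have "v' * (v * a) = a" using v' by (simp flip: mult.assoc)
    finally show "a \<in> {a. g dvd a \<and> u0 * a = z}" using a by simp
  qed simp
  have e2: "{xs. length xs = 1 \<and> (\<Sum>i<1. (\<lambda>_. u0) i * xs ! i) = z} = (\<lambda>a. [a]) ` {a. u0 * a = z}"
  proof (rule set_eqI, rule iffI)
    fix xs assume "xs \<in> {xs. length xs = 1 \<and> (\<Sum>i<1. (\<lambda>_. u0) i * xs ! i) = z}"
    then obtain a where "xs = [a]" "u0 * a = z" by (auto simp: length_Suc_conv)
    then show "xs \<in> (\<lambda>a. [a]) ` {a. u0 * a = z}" by blast
  qed auto
  have "g ^ t dvd g ^ Suc t" by (simp add: le_imp_power_dvd)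
  then have zt: "g ^ t dvd z" using a3 by (rule dvd_trans)
  have "card {xs. length xs = 1 \<and> (\<Sum>i<1. (\<lambda>_. u0) i * xs ! i) = z} = q ^ (s * (1 - 1) + t)"
    by (rule uniform[of 1 t "\<lambda>_. u0" 0 z]) (use a1 a2 zt in auto)
  then have "card ((\<lambda>a. [a]) ` {a. u0 * a = z}) = q ^ t" unfolding e2 by simp
  moreover have "card ((\<lambda>a. [a]) ` {a. u0 * a = z}) = card {a. u0 * a = z}"
    by (rule card_image) (auto simp: inj_on_def)
  ultimately show ?thesis using e1 by simp
qed

lemma main_b:
  "(\<forall>i\<le>n. g ^ t dvd u i) \<Longrightarrow> (\<exists>i\<le>n. \<not> g ^ Suc t dvd u i) \<Longrightarrow> g ^ Suc t dvd y \<Longrightarrow>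
   count (mset (map (\<lambda>col. \<Sum>i<Suc n. u i * col ! i) (Gbeta T g s (Suc n)))) y = q ^ t * L_beta q s n"
proof (induction n arbitrary: u y)
  case 0
  have "\<not> g ^ Suc t dvd u 0" using 0(2) by auto
  then have "u 0 \<noteq> y" using 0(3) by auto
  then show ?case by (simp add: L_zero)
next
  case (Suc n)
  define u' where "u' i = u (Suc i)" for i
  define D where "D col = (\<Sum>i<Suc n. u' i * col ! i)" for col
  have split: "(\<Sum>i<Suc (Suc n). u i * (h # col) ! i) = u 0 * h + D col" for h col
    unfolding D_def u'_def by (subst sum.lessThan_Suc_shift) simp
  define GA where "GA = Galpha T g s (Suc n)"
  define GB where "GB = Gbeta T g s (Suc n)"
  define IL where "IL = ideal_list T g s"
  have GBs: "Gbeta T g s (Suc (Suc n)) = map ((#) 1) GA @ concat (map (\<lambda>a. map ((#) a) GB) IL)"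
    unfolding GA_def GB_def IL_def by (simp only: Gbeta.simps)
  have c_eq: "map (\<lambda>col. \<Sum>i<Suc (Suc n). u i * col ! i) (Gbeta T g s (Suc (Suc n)))
     = map (\<lambda>col. u 0 + D col) GA @ concat (map (\<lambda>a. map (\<lambda>x. u 0 * a + x) (map D GB)) IL)"
    unfolding GBs by (simp only: map_append map_map map_concat o_def split mult_1_right)
  have dGA: "distinct GA" "set GA = {xs. length xs = Suc n}" unfolding GA_def using galpha_props[of "Suc n"] by (simp_all del: Galpha.simps)
  have cnt: "count (mset (map (\<lambda>col. \<Sum>i<Suc (Suc n). u i * col ! i) (Gbeta T g s (Suc (Suc n))))) y
     = card {col \<in> set GA. u 0 + D col = y} + (\<Sum>a\<in>{x. g dvd x}. count (mset (map D GB)) (y - u 0 * a))"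
  proof -
    have "count (mset (map (\<lambda>col. u 0 + D col) GA)) y = card {col \<in> set GA. u 0 + D col = y}"
      by (rule count_map_distinct[OF dGA(1)])
    moreover have "count (mset (concat (map (\<lambda>a. map (\<lambda>x. u 0 * a + x) (map D GB)) IL))) y
        = (\<Sum>a\<in>set IL. count (mset (map (\<lambda>x. u 0 * a + x) (map D GB))) y)"
      by (rule count_concat_map) (simp add: IL_def ideal_props)
    moreover have "set IL = {x. g dvd x}" unfolding IL_def by (rule ideal_props)
    moreover have "\<And>a. count (mset (map (\<lambda>x. u 0 * a + x) (map D GB))) y = count (mset (map D GB)) (y - u 0 * a)"
      by (rule count_map_shift)
    ultimately show ?thesis unfolding c_eq mset_append count_union by (simp del: mset_map)
  qed
  have u0t: "g ^ t dvd u 0" using Suc.prems(1) by auto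
  have Ia: "g ^ Suc t dvd u 0 * a" if "g dvd a" for a
  proof -
    have "g ^ t * g dvd u 0 * a" using u0t that by (rule mult_dvd_mono)
    then show ?thesis by (metis power_Suc2)
  qed
  have ySt: "g ^ t dvd y"
  proof -
    have "g ^ t dvd g ^ Suc t" by (simp add: le_imp_power_dvd)
    then show ?thesis using Suc.prems(3) by (rule dvd_trans)
  qed
  show ?case
  proof (cases "\<exists>i\<le>n. \<not> g ^ Suc t dvd u' i")
    case True
    then obtain i where i: "i \<le> n" "\<not> g ^ Suc t dvd u' i" by blast
    have u't: "\<forall>i\<le>n. g ^ t dvd u' i" using Suc.prems(1) unfolding u'_def by auto
    have IH: "count (mset (map D GB)) z = q ^ t * L_beta q s n" if "g ^ Suc t dvd z" for z
    proof -
      have "count (mset (map (\<lambda>col. \<Sum>i<Suc n. u' i * col ! i) (Gbeta T g s (Suc n)))) z = q ^ t * L_beta q s n"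
        by (rule Suc.IH[OF u't True that])
      then show ?thesis unfolding D_def GB_def .
    qed
    have e: "{col \<in> set GA. u 0 + D col = y} = {xs. length xs = Suc n \<and> (\<Sum>i<Suc n. u' i * xs ! i) = y - u 0}"
      using dGA(2) unfolding D_def by (auto simp: algebra_simps)
    have b1: "card {col \<in> set GA. u 0 + D col = y} = q ^ (s * n + t)"
    proof -
      have "card {xs. length xs = Suc n \<and> (\<Sum>i<Suc n. u' i * xs ! i) = y - u 0} = q ^ (s * (Suc n - 1) + t)"
        by (rule uniform[of "Suc n" t u' i "y - u 0"]) (use u't i ySt u0t in \<open>auto intro: dvd_diff\<close>)
      then show ?thesis unfolding e by simp
    qed
    have b2: "(\<Sum>a\<in>{x. g dvd x}. count (mset (map D GB)) (y - u 0 * a)) = q ^ (s - 1) * (q ^ t * L_beta q s n)"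
    proof -
      have "(\<Sum>a\<in>{x. g dvd x}. count (mset (map D GB)) (y - u 0 * a)) = (\<Sum>a\<in>{x. g dvd x}. q ^ t * L_beta q s n)"
      proof (rule sum.cong)
        fix a assume "a \<in> {x. g dvd x}"
        then have "g ^ Suc t dvd y - u 0 * a" using Ia Suc.prems(3) by (auto intro: dvd_diff)
        then show "count (mset (map D GB)) (y - u 0 * a) = q ^ t * L_beta q s n" by (rule IH)
      qed (rule refl)
      also have "\<dots> = card {x. g dvd x} * (q ^ t * L_beta q s n)" by simp
      also have "card {x. g dvd x} = q ^ (s - 1)" using card_I[of 1] s_pos by simp
      finally show ?thesis .
    qed
    have "q ^ t * L_beta q s (Suc n) = q ^ t * (q ^ (s * n) + q ^ (s - 1) * L_beta q s n)"
      using L_rec[of q s n] T_len s_pos by simp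
    also have "\<dots> = q ^ (s * n + t) + q ^ (s - 1) * (q ^ t * L_beta q s n)"
      by (simp add: algebra_simps power_add)
    finally show ?thesis using cnt b1 b2 by simp
  next
    case False
    then have u'1: "\<forall>i\<le>n. g ^ Suc t dvd u' i" by auto
    have u0n: "\<not> g ^ Suc t dvd u 0"
    proof -
      obtain i where i: "i \<le> Suc n" "\<not> g ^ Suc t dvd u i" using Suc.prems(2) by blast
      show ?thesis
      proof (cases i)
        case 0 then show ?thesis using i by simp
      next
        case (Suc i')
        then have "i' \<le> n" "\<not> g ^ Suc t dvd u' i'" using i unfolding u'_def by auto
        then show ?thesis using u'1 by blast
      qed
    qed
    have Ddv: "g ^ Suc t dvd D col" for col
      unfolding D_def by (rule dvd_sum) (use u'1 in \<open>auto intro: dvd_mult2\<close>)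
    have b1: "card {col \<in> set GA. u 0 + D col = y} = 0"
    proof -
      have "{col \<in> set GA. u 0 + D col = y} = {}"
      proof (rule ccontr)
        assume "{col \<in> set GA. u 0 + D col = y} \<noteq> {}"
        then obtain col where "u 0 + D col = y" by blast
        then have "u 0 = y - D col" by (simp add: algebra_simps)
        moreover have "g ^ Suc t dvd y - D col" using Ddv Suc.prems(3) by (rule dvd_diff[rotated])
        ultimately show False using u0n by simp
      qed
      then show ?thesis by simp
    qed
    have "(\<Sum>a\<in>{x. g dvd x}. count (mset (map D GB)) (y - u 0 * a))
        = sum_list (map (\<lambda>b. card {a\<in>{x. g dvd x}. u 0 * a = y - b}) (map D GB))"
      by (rule swap_count) simp
    also have "\<dots> = sum_list (map (\<lambda>b. q ^ t) (map D GB))"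
    proof (rule arg_cong[where f = sum_list], rule map_cong[OF refl])
      fix b assume "b \<in> set (map D GB)"
      then obtain col where "b = D col" by auto
      then have "g ^ Suc t dvd y - b" using Ddv Suc.prems(3) by (auto intro: dvd_diff)
      then have "card {a. g dvd a \<and> u 0 * a = y - b} = q ^ t" by (rule lemmaM[OF u0t u0n])
      then show "card {a\<in>{x. g dvd x}. u 0 * a = y - b} = q ^ t" by simp
    qed
    also have "\<dots> = length GB * q ^ t" by (simp add: comp_def sum_list_triv)
    also have "\<dots> = q ^ t * L_beta q s (Suc n)" unfolding GB_def by (simp add: gbeta_len)
    finally show ?thesis using cnt b1 by simp
  qed
qed

end

theorem proposition3p20:
  fixes \<gamma> :: "'a::{comm_ring_1,finite}" and T :: "'a list" and s k :: nat and c :: "'a list"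
  assumes chain: "\<forall>I J :: 'a set. is_ideal I \<and> is_ideal J \<longrightarrow> I \<subseteq> J \<or> J \<subseteq> I"
    and maxideal: "{x. \<gamma> dvd x} = {x. \<not> x dvd 1}"
    and s_pos: "1 \<le> s" and nil: "\<gamma> ^ s = 0" and nil_min: "\<gamma> ^ (s - 1) \<noteq> 0"
    and T_len: "2 \<le> length T" and T0: "T ! 0 = 0" and T1: "T ! 1 = 1"
    and reps: "\<forall>x. \<exists>!i. i < length T \<and> \<gamma> dvd (x - T ! i)"
    and k: "2 \<le> k"
    and c_in: "c \<in> code_beta T \<gamma> s k"
    and c_nz: "\<exists>x\<in>set c. x \<noteq> 0"
  shows "(\<forall>x. \<gamma> ^ (nu_vec \<gamma> c + 1) dvd x \<longrightarrow>
              count (mset c) x = length T ^ nu_vec \<gamma> c * L_beta (length T) s (k - 1))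
         \<and> (\<forall>x\<in>set c. \<gamma> ^ nu_vec \<gamma> c dvd x)
         \<and> length (filter (\<lambda>x. \<not> \<gamma> ^ (nu_vec \<gamma> c + 1) dvd x) c) = length T ^ (s * (k - 1))"
proof -
  interpret cr \<gamma> T s
    by (rule cr.intro) (rule maxideal, rule s_pos, rule nil, rule nil_min, rule T_len, rule reps)
  from c_in obtain u where c: "c = map (\<lambda>col. \<Sum>i<k. u i * col ! i) (Gbeta T \<gamma> s k)"
    unfolding code_beta_def by blast
  define n where "n = k - 1"
  have kn: "k = Suc n" using k by (simp add: n_def)
  have unz: "\<exists>i<k. u i \<noteq> 0"
  proof (rule ccontr)
    assume "\<not> (\<exists>i<k. u i \<noteq> 0)"
    then have z: "\<forall>i<k. u i = 0" by blast
    have "\<forall>x\<in>set c. x = 0"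
    proof
      fix x assume "x \<in> set c"
      then obtain col where "x = (\<Sum>i<k. u i * col ! i)" unfolding c by auto
      then show "x = 0" using z by simp
    qed
    with c_nz show False by blast
  qed
  have Ps: "\<exists>m. \<exists>i<k. \<not> \<gamma> ^ m dvd u i"
  proof -
    obtain i where "i < k" "u i \<noteq> 0" using unz by blast
    then have "\<not> \<gamma> ^ s dvd u i" using nil by simp
    then show ?thesis using \<open>i < k\<close> by blast
  qed
  then obtain m0 where m0: "\<exists>i<k. \<not> \<gamma> ^ m0 dvd u i" "\<And>m. m < m0 \<Longrightarrow> \<not> (\<exists>i<k. \<not> \<gamma> ^ m dvd u i)"
    using exists_least_iff[of "\<lambda>m. \<exists>i<k. \<not> \<gamma> ^ m dvd u i"] by blast
  have "m0 \<noteq> 0" using m0(1) by (metis one_dvd power_0)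
  define t where "t = m0 - 1"
  have m0t: "m0 = Suc t" using \<open>m0 \<noteq> 0\<close> unfolding t_def by simp
  have ut: "\<forall>i\<le>n. \<gamma> ^ t dvd u i" using m0(2)[of t] m0t kn by auto
  have ut1: "\<exists>i\<le>n. \<not> \<gamma> ^ Suc t dvd u i" using m0(1) m0t kn by (auto simp: less_Suc_eq_le)
  have cform: "c = map (\<lambda>col. \<Sum>i<Suc n. u i * col ! i) (Gbeta T \<gamma> s (Suc n))" using c kn by simp
  have B: "\<forall>y. \<gamma> ^ Suc t dvd y \<longrightarrow> count (mset c) y = length T ^ t * L_beta (length T) s n"
    using main_b[OF ut ut1] cform by simp
  have A: "\<forall>x\<in>set c. \<gamma> ^ t dvd x"
  proof
    fix x assume "x \<in> set c"
    then obtain col where x: "x = (\<Sum>i<Suc n. u i * col ! i)" unfolding cform by auto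
    show "\<gamma> ^ t dvd x" unfolding x by (rule dvd_sum) (use ut in \<open>auto intro: dvd_mult2\<close>)
  qed
  obtain i0 where i0: "i0 \<le> n" "\<not> \<gamma> ^ Suc t dvd u i0" using ut1 by blast
  have ts: "t < s" using t_lt_s[of t "u i0"] ut i0 by blast
  have Pcount: "length (filter (\<lambda>x. x \<in> {x. \<gamma> ^ Suc t dvd x}) c) = length T ^ (s - 1) * L_beta (length T) s n"
  proof -
    have "length (filter (\<lambda>x. x \<in> {x. \<gamma> ^ Suc t dvd x}) c) = (\<Sum>y\<in>{x. \<gamma> ^ Suc t dvd x}. count (mset c) y)"
      by (rule filter_count) simp
    also have "\<dots> = (\<Sum>y\<in>{x. \<gamma> ^ Suc t dvd x}. length T ^ t * L_beta (length T) s n)"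
      by (rule sum.cong) (use B in auto)
    also have "\<dots> = card {x. \<gamma> ^ Suc t dvd x} * (length T ^ t * L_beta (length T) s n)" by simp
    also have "card {x. \<gamma> ^ Suc t dvd x} = length T ^ (s - Suc t)" using card_I[of "Suc t"] ts by simp
    also have "length T ^ (s - Suc t) * (length T ^ t * L_beta (length T) s n)
        = length T ^ (s - Suc t + t) * L_beta (length T) s n" by (simp add: power_add)
    also have "s - Suc t + t = s - 1" using ts by simp
    finally show ?thesis .
  qed
  have len: "length c = length T ^ (s * n) + length T ^ (s - 1) * L_beta (length T) s n"
    using cform gbeta_len[of n] L_rec[of "length T" s n] T_len s_pos by simp
  have C: "length (filter (\<lambda>x. \<not> \<gamma> ^ Suc t dvd x) c) = length T ^ (s * n)"
  proof -
    have "length (filter (\<lambda>x. x \<in> {x. \<gamma> ^ Suc t dvd x}) c) + length (filter (\<lambda>x. \<not> x \<in> {x. \<gamma> ^ Suc t dvd x}) c) = length c"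
      by (rule sum_length_filter_compl)
    then show ?thesis using Pcount len by simp
  qed
  have "length T > 0" using T_len by linarith
  then have "length T ^ (s * n) > 0" by simp
  then have "filter (\<lambda>x. \<not> \<gamma> ^ Suc t dvd x) c \<noteq> []" using C by (metis length_0_conv less_irrefl)
  then obtain x0 where x0: "x0 \<in> set c" "\<not> \<gamma> ^ Suc t dvd x0" by (auto simp: filter_empty_conv)
  have nu: "nu_vec \<gamma> c = t"
    unfolding nu_vec_def
  proof (rule Min_eqI)
    show "finite (nu_el \<gamma> ` (set c - {0}))" by simp
  next
    fix y assume "y \<in> nu_el \<gamma> ` (set c - {0})"
    then obtain x where x: "x \<in> set c" "x \<noteq> 0" "y = nu_el \<gamma> x" by auto
    obtain m where m: "m < s" "\<gamma> ^ m dvd x" "\<not> \<gamma> ^ Suc m dvd x" using val_exists[OF x(2)] by blast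
    have "nu_el \<gamma> x = m" using nu_el_eq[OF m(2,3)] .
    moreover have "t \<le> m" using dvd_pow_iff[OF m(2,3), of t] A x(1) by blast
    ultimately show "t \<le> y" using x(3) by simp
  next
    have "x0 \<noteq> 0" using x0(2) by auto
    moreover have "nu_el \<gamma> x0 = t" using nu_el_eq[of t x0] A x0 by blast
    ultimately show "t \<in> nu_el \<gamma> ` (set c - {0})" using x0(1) by force
  qed
  show ?thesis unfolding nu using A B C kn by simp
qed

end
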